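(* Let $\rho_0$ be a reference probability density on $\mathbb{R}^d$, let $\hat{\mathbf{x}}^{(1)},\dots,\hat{\mathbf{x}}^{(N)}\in\mathbb{R}^d$ be samples from a predictive distribution $\rho_1$, let $\mathbf{z}_0^{(n)}\sim\rho_0$ and set $\mathbf{z}_1^{(n)}=\hat{\mathbf{x}}^{(n)}$, $n\in[N]$. Let $\mathbf{y}$ be an observation and $p(\mathbf{y}\mid\mathbf{x})>0$ a likelihood, and define the likelihood weights $w_n(\mathbf{y})=p(\mathbf{y}\mid\hat{\mathbf{x}}^{(n)})/\sum_{m=1}^N p(\mathbf{y}\mid\hat{\mathbf{x}}^{(m)})$. Let $\sigma_{\min}>0$ and suppose the conditional paths satisfy $p_1(\mathbf{z}\mid\mathbf{z}_0,\mathbf{z}_1)=\mathcal{N}(\mathbf{z}\mid\mathbf{z}_1,\sigma_{\min}^2 I)$ and $p_t(\mathbf{z}\mid\mathbf{z}_0^{(n)},\mathbf{z}_1^{(n)})>0$ for all $t,\mathbf{z},n$. Define the Monte-Carlo-guided vector field $$\mathbf{u}^{\mathrm{MCG}}_t(\mathbf{z};\mathbf{y})=\sum_{n=1}^N w_n'(\mathbf{z};\mathbf{y})\,\mathbf{u}_t(\mathbf{z}\mid\mathbf{z}_0^{(n)},\mathbf{z}_1^{(n)}),\qquad w_n'(\mathbf{z};\mathbf{y})=\frac{p(\mathbf{y}\mid\hat{\mathbf{x}}^{(n)})\,p_t(\mathbf{z}\mid\mathbf{z}_0^{(n)},\mathbf{z}_1^{(n)})}{\sum_{m=1}^N p(\mathbf{y}\mid\hat{\mathbf{x}}^{(m)})\,p_t(\mathbf{z}\mid\mathbf{z}_0^{(m)},\mathbf{z}_1^{(m)})}.$$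 Assume the flow $\boldsymbol\phi^{\mathbf{y}}_t(\cdot;\sigma_{\min})$ of $\mathbf{u}^{\mathrm{MCG}}_t(\cdot;\mathbf{y})$ exists on $[0,1]$ and that $(\boldsymbol\phi^{\mathbf{y}}_t)_\#\rho_0$ is the unique solution, among paths of probability densities, of $\partial_t q_t+\nabla\cdot(q_t\mathbf{u}^{\mathrm{MCG}}_t)=0$, $q_0=\rho_0$. Then $(\boldsymbol\phi^{\mathbf{y}}_t)_\#\rho_0=\sum_{n=1}^N w_n(\mathbf{y})p_t(\cdot\mid\mathbf{z}_0^{(n)},\mathbf{z}_1^{(n)})$, so that $$(\boldsymbol\phi^{\mathbf{y}}_1)_\#\rho_0=\sum_{n=1}^N w_n(\mathbf{y})\,\mathcal{N}(\cdot\mid\hat{\mathbf{x}}^{(n)},\sigma_{\min}^2 I),$$ and as $\sigma_{\min}\to0$ this measure converges weakly to the bootstrap-particle-filter resampling measure $\rho^N_{\mathrm{BPF}}(d\mathbf{z};\mathbf{y})=\sum_{n=1}^N w_n(\mathbf{y})\delta_{\hat{\mathbf{x}}^{(n)}}(d\mathbf{z})$. Equivalently, if $\mathbf{x}_0\sim\rho_0$, then $\boldsymbol\phi^{\mathbf{y}}_1(\mathbf{x}_0;\sigma_{\min})$ converges in distribution, as $\sigma_{\min}\to0$, to a random variable with law $\rho^N_{\mathrm{BPF}}(\cdot;\mathbf{y})$.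
   Context: For each pair $(\mathbf{z}_0,\mathbf{z}_1)$, $\{p_t(\cdot\mid\mathbf{z}_0,\mathbf{z}_1)\}_{t\in[0,1]}$ is a path of probability densities on $\mathbb{R}^d$ and $\mathbf{u}_t(\cdot\mid\mathbf{z}_0,\mathbf{z}_1)$ a time-dependent vector field generating it, i.e. $\partial_t p_t(\mathbf{z}\mid\mathbf{z}_0,\mathbf{z}_1)+\nabla_{\mathbf{z}}\cdot[p_t(\mathbf{z}\mid\mathbf{z}_0,\mathbf{z}_1)\mathbf{u}_t(\mathbf{z}\mid\mathbf{z}_0,\mathbf{z}_1)]=0$ with $p_0(\cdot\mid\mathbf{z}_0,\mathbf{z}_1)=\rho_0$. For a measurable map $T$ and measure $\mu$, $T_\#\mu(B)=\mu(T^{-1}(B))$. Weak convergence means convergence of integrals of all bounded continuous functions. The bootstrap particle filter's analysis step resamples the particles $\hat{\mathbf{x}}^{(n)}$ with probabilities proportional to $p(\mathbf{y}\mid\hat{\mathbf{x}}^{(n)})$, i.e. draws from $\rho^N_{\mathrm{BPF}}$. *)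

theory Defs
  imports "HOL-Probability.Probability"
begin

definition is_density :: "('a::euclidean_space \<Rightarrow> real) \<Rightarrow> bool" where
  "is_density f \<longleftrightarrow> f \<in> borel_measurable lborel \<and> (\<forall>x. 0 \<le> f x)
     \<and> integrable lborel f \<and> integral\<^sup>L lborel f = 1"

definition density_path :: "(real \<Rightarrow> 'a::euclidean_space \<Rightarrow> real) \<Rightarrow> bool" where
  "density_path q \<longleftrightarrow> (\<forall>t\<in>{0..1}. is_density (q t))"

text \<open>Continuity equation  d/dt q_t + div (q_t v_t) = 0  on [0,1] (classical sense);
  the divergence of a differentiable field F at z is the trace of its derivative.\<close>
definition solves_CE :: "(real \<Rightarrow> 'a::euclidean_space \<Rightarrow> real) \<Rightarrow> (real \<Rightarrow> 'a \<Rightarrow> 'a) \<Rightarrow> bool" where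
  "solves_CE q v \<longleftrightarrow> (\<forall>t\<in>{0..1}. \<forall>z. \<exists>dq D.
      ((\<lambda>s. q s z) has_real_derivative dq) (at t within {0..1})
    \<and> ((\<lambda>x. q t x *\<^sub>R v t x) has_derivative D) (at z)
    \<and> dq + (\<Sum>i\<in>Basis. D i \<bullet> i) = 0)"

definition gauss_density :: "'a::euclidean_space \<Rightarrow> real \<Rightarrow> 'a \<Rightarrow> real" where
  "gauss_density m s z = (2 * pi * s\<^sup>2) powr (- real DIM('a) / 2) * exp (- (norm (z - m))\<^sup>2 / (2 * s\<^sup>2))"

definition lik_weight :: "('a \<Rightarrow> real) \<Rightarrow> (nat \<Rightarrow> 'a) \<Rightarrow> nat \<Rightarrow> nat \<Rightarrow> real" where
  "lik_weight L xh N n = L (xh n) / (\<Sum>m\<in>{1..N}. L (xh m))"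

definition mcg_field :: "('a \<Rightarrow> real) \<Rightarrow> (nat \<Rightarrow> 'a) \<Rightarrow> (nat \<Rightarrow> 'a)
    \<Rightarrow> (real \<Rightarrow> 'a \<times> 'a \<Rightarrow> 'a \<Rightarrow> real) \<Rightarrow> (real \<Rightarrow> 'a \<times> 'a \<Rightarrow> 'a \<Rightarrow> 'a::euclidean_space)
    \<Rightarrow> nat \<Rightarrow> real \<Rightarrow> 'a \<Rightarrow> 'a" where
  "mcg_field L z0 xh p u N t z =
     (\<Sum>n\<in>{1..N}. (L (xh n) * p t (z0 n, xh n) z
        / (\<Sum>m\<in>{1..N}. L (xh m) * p t (z0 m, xh m) z)) *\<^sub>R u t (z0 n, xh n) z)"

text \<open>Bootstrap particle filter measure sum_n w_n(y) delta_{xh n}, as the image of the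
  weights on the index set {1..N} under xh.\<close>
definition bpf_measure :: "('a \<Rightarrow> real) \<Rightarrow> (nat \<Rightarrow> 'a::euclidean_space) \<Rightarrow> nat \<Rightarrow> 'a measure" where
  "bpf_measure L xh N =
     distr (density (count_space {1..N}) (\<lambda>n. ennreal (lik_weight L xh N n))) borel xh"

definition weak_conv_at :: "('b \<Rightarrow> 'a::topological_space measure) \<Rightarrow> 'a measure \<Rightarrow> 'b filter \<Rightarrow> bool" where
  "weak_conv_at M \<mu> F \<longleftrightarrow> (\<forall>f::'a \<Rightarrow> real. continuous_on UNIV f \<and> bounded (range f) \<longrightarrow>
      ((\<lambda>s. \<integral>x. f x \<partial>(M s)) \<longlongrightarrow> (\<integral>x. f x \<partial>\<mu>)) F)"

end

theory Submission
  imports Defs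
begin


lemma gauss_scale:
  fixes m :: "'a::euclidean_space"
  assumes s: "0 < s" "s < 1" and r: "\<delta> \<le> norm (z - m)" "0 \<le> \<delta>"
  shows "gauss_density m s z \<le> (s powr (- real DIM('a)) * exp (- \<delta>\<^sup>2 / s\<^sup>2 / 2) * exp (\<delta>\<^sup>2 / 2)) * gauss_density m 1 z"
proof -
  define d where "d = real DIM('a)"
  define R where "R = (norm (z - m))\<^sup>2"
  have pw: "(2 * pi * s\<^sup>2) powr (- d / 2) = (2 * pi) powr (- d / 2) * s powr (- d)"
  proof -
    have "(2 * pi * s\<^sup>2) powr (- d / 2) = (2 * pi) powr (- d / 2) * (s\<^sup>2) powr (- d / 2)"
      by (simp add: powr_mult)
    also have "(s\<^sup>2) powr (- d / 2) = (s powr 2) powr (- d / 2)"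
      using s by (simp add: powr_numeral)
    also have "\<dots> = s powr (- d)"
      by (simp add: powr_powr)
    finally show ?thesis .
  qed
  have Rd: "\<delta>\<^sup>2 \<le> R" unfolding R_def using r by (simp add: power_mono)
  define a where "a = 1 / (2 * s\<^sup>2)"
  have a: "a \<ge> 1/2" unfolding a_def using s
    by (simp add: field_simps power_le_one)
  have "- R * a \<le> - \<delta>\<^sup>2 * a + \<delta>\<^sup>2 / 2 - R / 2"
  proof -
    have "0 \<le> (R - \<delta>\<^sup>2) * (a - 1/2)" using Rd a by simp
    then show ?thesis by (simp add: algebra_simps)
  qed
  moreover have "- R / (2 * s\<^sup>2) = - R * a" "- \<delta>\<^sup>2 / s\<^sup>2 / 2 = - \<delta>\<^sup>2 * a"
    unfolding a_def by simp_all
  ultimately have e: "exp (- R / (2 * s\<^sup>2)) \<le> exp (- \<delta>\<^sup>2 / s\<^sup>2 / 2) * exp (\<delta>\<^sup>2 / 2) * exp (- R / 2)"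
    by (simp add: exp_add[symmetric])
  have "gauss_density m s z = (2 * pi) powr (- d / 2) * s powr (- d) * exp (- R / (2 * s\<^sup>2))"
    using pw unfolding gauss_density_def d_def R_def by simp
  also have "\<dots> \<le> (2 * pi) powr (- d / 2) * s powr (- d) * (exp (- \<delta>\<^sup>2 / s\<^sup>2 / 2) * exp (\<delta>\<^sup>2 / 2) * exp (- R / 2))"
    using e by (intro mult_left_mono) auto
  also have "\<dots> = (s powr (- d) * exp (- \<delta>\<^sup>2 / s\<^sup>2 / 2) * exp (\<delta>\<^sup>2 / 2)) * gauss_density m 1 z"
    unfolding gauss_density_def d_def R_def by simp
  finally show ?thesis unfolding d_def .
qed

lemma exp_ge_pow: "0 \<le> y \<Longrightarrow> n \<ge> 1 \<Longrightarrow> (y / real n) ^ n \<le> exp y"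
proof -
  assume y: "0 \<le> y" and n: "n \<ge> 1"
  have "exp y = exp (y / real n) ^ n"
    using n by (simp add: exp_of_nat_mult[symmetric])
  moreover have "y / real n \<le> exp (y / real n)"
    using exp_ge_add_one_self[of "y / real n"] by linarith
  ultimately show ?thesis using y by (simp add: power_mono)
qed

lemma K_bound:
  assumes s: "0 < s" and e: "0 < e" and n: "n \<ge> 1"
  shows "s powr (- real n) * exp (- e / s\<^sup>2) \<le> (real n / e) ^ n * s ^ n"
proof -
  have "(e / s\<^sup>2 / real n) ^ n \<le> exp (e / s\<^sup>2)"
    using s e n by (intro exp_ge_pow) auto
  then have "exp (- e / s\<^sup>2) \<le> 1 / (e / s\<^sup>2 / real n) ^ n"
    using s e n by (simp add: exp_minus field_simps)
  also have "\<dots> = (real n / e) ^ n * s ^ n * s ^ n"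
    using s e n by (simp add: field_simps power_mult_distrib power_mult[symmetric] mult.commute flip: power_add mult_2)
  finally have ex: "exp (- e / s\<^sup>2) \<le> (real n / e) ^ n * s ^ n * s ^ n" .
  have pe:  "s powr (- real n) = 1 / s ^ n"
    using s by (simp add: powr_minus powr_realpow divide_inverse)
  have "s powr (- real n) * exp (- e / s\<^sup>2) \<le> (1 / s ^ n) * ((real n / e) ^ n * s ^ n * s ^ n)"
    unfolding pe by (rule mult_left_mono[OF ex]) (use s in simp)
  also have "\<dots> = (real n / e) ^ n * s ^ n" using s by simp
  finally show ?thesis .
qed

lemma gauss_conv:
  fixes f :: "'a::euclidean_space \<Rightarrow> real" and m :: 'a
  assumes dens: "\<And>s. s > 0 \<Longrightarrow> is_density (gauss_density m s)"
    and cont: "continuous_on UNIV f" and bd: "bounded (range f)"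
  shows "((\<lambda>s. \<integral>z. gauss_density m s z * f z \<partial>lborel) \<longlongrightarrow> f m) (at_right 0)"
proof (rule tendstoI)
  fix \<epsilon> :: real assume \<epsilon>: "\<epsilon> > 0"
  obtain B where Bpos: "B > 0" and B: "\<And>z. \<bar>f z\<bar> \<le> B"
    using bd unfolding bounded_pos by auto
  have fm: "f \<in> borel_measurable lborel"
    using borel_measurable_continuous_onI[OF cont] by simp
  have "isCont f m" using cont by (simp add: continuous_on_eq_continuous_at)
  then obtain \<delta> where \<delta>: "\<delta> > 0" and \<delta>f: "\<And>z. dist z m < \<delta> \<Longrightarrow> dist (f z) (f m) < \<epsilon>/2"
    unfolding continuous_at_eps_delta using \<epsilon> by (metis half_gt_zero)
  define n where "n = DIM('a)"
  have n1: "n \<ge> 1" unfolding n_def by (simp add: DIM_positive Suc_leI)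
  define K where "K s = (real n / (\<delta>\<^sup>2/2)) ^ n * s ^ n * exp (\<delta>\<^sup>2/2)" for s :: real
  have "(K \<longlongrightarrow> (real n / (\<delta>\<^sup>2/2)) ^ n * 0 ^ n * exp (\<delta>\<^sup>2/2)) (at_right 0)"
    unfolding K_def by (intro tendsto_intros)
  moreover have "(0::real) ^ n = 0" using n1 by simp
  ultimately have "(K \<longlongrightarrow> 0) (at_right 0)" by simp
  then have ev1: "eventually (\<lambda>s. K s < \<epsilon> / (4 * B)) (at_right 0)"
    using \<epsilon> Bpos by (intro order_tendstoD(2)) auto
  have "((\<lambda>s::real. s) \<longlongrightarrow> 0) (at_right 0)" by (rule tendsto_ident_at)
  then have ev2: "eventually (\<lambda>s::real. s < 1) (at_right 0)"
    by (intro order_tendstoD(2)) auto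
  show "eventually (\<lambda>s. dist (\<integral>z. gauss_density m s z * f z \<partial>lborel) (f m) < \<epsilon>) (at_right 0)"
    using ev1 ev2 eventually_at_right_less[of 0]
  proof eventually_elim
    case (elim s)
    then have s: "0 < s" "s < 1" and Ks: "K s < \<epsilon> / (4 * B)" by auto
    have gs: "is_density (gauss_density m s)" and g1: "is_density (gauss_density m 1)"
      using dens s by auto
    have gsi: "integrable lborel (gauss_density m s)" and gsm: "gauss_density m s \<in> borel_measurable lborel"
      and gs1: "integral\<^sup>L lborel (gauss_density m s) = 1" and gsp: "\<And>z. 0 \<le> gauss_density m s z"
      using gs unfolding is_density_def by auto
    have g1i: "integrable lborel (gauss_density m 1)" and g1p: "\<And>z. 0 \<le> gauss_density m 1 z"
      and g11: "integral\<^sup>L lborel (gauss_density m 1) = 1"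
      using g1 unfolding is_density_def by auto
    have Kpos: "0 \<le> K s" unfolding K_def using s by simp
    have int1: "integrable lborel (\<lambda>z. gauss_density m s z * f z)"
    proof (rule Bochner_Integration.integrable_bound[OF integrable_mult_right[OF gsi, of B]])
      show "(\<lambda>z. gauss_density m s z * f z) \<in> borel_measurable lborel" using gsm fm by simp
      show "AE x in lborel. norm (gauss_density m s x * f x) \<le> norm (B * gauss_density m s x)"
      proof (intro AE_I2)
        fix x
        have "gauss_density m s x * \<bar>f x\<bar> \<le> gauss_density m s x * B"
          using B[of x] gsp[of x] by (rule mult_left_mono)
        then show "norm (gauss_density m s x * f x) \<le> norm (B * gauss_density m s x)"
          using gsp[of x] Bpos by (simp add: abs_mult mult.commute)
      qed
    qed
    have int2: "integrable lborel (\<lambda>z. gauss_density m s z * (f z - f m))"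
      using int1 gsi by (simp add: right_diff_distrib)
    have int3: "integrable lborel (\<lambda>z. \<epsilon>/2 * gauss_density m s z + 2 * B * K s * gauss_density m 1 z)"
      using gsi g1i by simp
    have eq: "(\<integral>z. gauss_density m s z * f z \<partial>lborel) - f m = (\<integral>z. gauss_density m s z * (f z - f m) \<partial>lborel)"
      using int1 gsi gs1 by (simp add: right_diff_distrib)
    have pt: "\<bar>gauss_density m s z * (f z - f m)\<bar> \<le> \<epsilon>/2 * gauss_density m s z + 2 * B * K s * gauss_density m 1 z" for z
    proof (cases "dist z m < \<delta>")
      case True
      then have "\<bar>f z - f m\<bar> \<le> \<epsilon>/2" using \<delta>f[of z] by (simp add: dist_real_def)
      then have "\<bar>gauss_density m s z * (f z - f m)\<bar> \<le> \<epsilon>/2 * gauss_density m s z"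
      proof -
        have "gauss_density m s z * \<bar>f z - f m\<bar> \<le> gauss_density m s z * (\<epsilon>/2)"
          using gsp[of z] \<open>\<bar>f z - f m\<bar> \<le> \<epsilon>/2\<close> by (rule mult_left_mono[rotated])
        then show ?thesis using gsp[of z] by (simp add: abs_mult mult.commute)
      qed
      moreover have "0 \<le> 2 * B * K s * gauss_density m 1 z" using Bpos Kpos g1p[of z] by simp
      ultimately show ?thesis by linarith
    next
      case False
      then have r: "\<delta> \<le> norm (z - m)" by (simp add: dist_norm)
      have a: "gauss_density m s z \<le> (s powr (- real DIM('a)) * exp (- \<delta>\<^sup>2 / s\<^sup>2 / 2) * exp (\<delta>\<^sup>2 / 2)) * gauss_density m 1 z"
        by (rule gauss_scale[OF s r]) (use \<delta> in simp)
      have kb0: "s powr (- real n) * exp (- (\<delta>\<^sup>2/2) / s\<^sup>2) \<le> (real n / (\<delta>\<^sup>2/2)) ^ n * s ^ n"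
        by (rule K_bound) (use s \<delta> n1 in auto)
      have ee: "exp (- (\<delta>\<^sup>2/2) / s\<^sup>2) = exp (- \<delta>\<^sup>2 / s\<^sup>2 / 2)"
        by (simp add: mult.commute)
      note kb = kb0[unfolded ee]
      then have "s powr (- real DIM('a)) * exp (- \<delta>\<^sup>2 / s\<^sup>2 / 2) * exp (\<delta>\<^sup>2 / 2) \<le> K s"
        unfolding K_def n_def by (rule mult_right_mono) simp
      then have b: "gauss_density m s z \<le> K s * gauss_density m 1 z"
        using a g1p[of z] by (meson mult_right_mono order_trans)
      have c: "\<bar>f z - f m\<bar> \<le> 2 * B" using B[of z] B[of m] by linarith
      have "\<bar>gauss_density m s z * (f z - f m)\<bar> = gauss_density m s z * \<bar>f z - f m\<bar>"
        using gsp[of z] by (simp add: abs_mult)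
      also have "\<dots> \<le> (K s * gauss_density m 1 z) * (2 * B)"
        using b c gsp[of z] by (intro mult_mono) auto
      also have "\<dots> = 2 * B * K s * gauss_density m 1 z" by simp
      finally have "\<bar>gauss_density m s z * (f z - f m)\<bar> \<le> 2 * B * K s * gauss_density m 1 z" .
      moreover have "0 \<le> \<epsilon>/2 * gauss_density m s z" using \<epsilon> gsp[of z] by simp
      ultimately show ?thesis by linarith
    qed
    have "\<bar>(\<integral>z. gauss_density m s z * f z \<partial>lborel) - f m\<bar>
        \<le> (\<integral>z. \<epsilon>/2 * gauss_density m s z + 2 * B * K s * gauss_density m 1 z \<partial>lborel)"
      unfolding eq using int2 int3 pt by (rule integral_abs_bound_integral)
    also have "\<dots> = \<epsilon>/2 + 2 * B * K s"
      using gsi g1i gs1 g11 by simp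
    also have "\<dots> < \<epsilon>/2 + 2 * B * (\<epsilon> / (4 * B))"
      using mult_strict_left_mono[OF Ks, of "2 * B"] Bpos by simp
    also have "\<dots> = \<epsilon>" using Bpos by simp
    finally show ?case by (simp add: dist_real_def)
  qed
qed


lemma dens_bdd_integrable:
  fixes f :: "'a::euclidean_space \<Rightarrow> real"
  assumes g: "is_density g" and fm: "f \<in> borel_measurable borel" and bd: "bounded (range f)"
  shows "integrable lborel (\<lambda>z. g z * f z)"
proof -
  obtain B where Bpos: "B > 0" and B: "\<And>z. \<bar>f z\<bar> \<le> B"
    using bd unfolding bounded_pos by auto
  have gi: "integrable lborel g" and gm: "g \<in> borel_measurable lborel" and gp: "\<And>z. 0 \<le> g z"
    using g unfolding is_density_def by auto
  show ?thesis
  proof (rule Bochner_Integration.integrable_bound[OF integrable_mult_right[OF gi, of B]])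
    show "(\<lambda>z. g z * f z) \<in> borel_measurable lborel" using gm fm by simp
    show "AE x in lborel. norm (g x * f x) \<le> norm (B * g x)"
    proof (intro AE_I2)
      fix x
      have "g x * \<bar>f x\<bar> \<le> g x * B"
        using B[of x] gp[of x] by (rule mult_left_mono)
      then show "norm (g x * f x) \<le> norm (B * g x)"
        using gp[of x] Bpos by (simp add: abs_mult mult.commute)
    qed
  qed
qed

theorem theorem4p3:
  fixes \<rho>0 :: "'a::euclidean_space \<Rightarrow> real"
    and N :: nat
    and xh z0 :: "nat \<Rightarrow> 'a"
    and lik :: "'b \<Rightarrow> 'a \<Rightarrow> real" and y :: 'b
    and p :: "real \<Rightarrow> real \<Rightarrow> 'a \<times> 'a \<Rightarrow> 'a \<Rightarrow> real"
    and u :: "real \<Rightarrow> real \<Rightarrow> 'a \<times> 'a \<Rightarrow> 'a \<Rightarrow> 'a"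
    and \<phi> :: "real \<Rightarrow> real \<Rightarrow> 'a \<Rightarrow> 'a"
  assumes N_pos: "N \<ge> 1"
    and ref: "is_density \<rho>0"
    and lik_pos: "\<forall>x. lik y x > 0"
    and path_dens: "\<forall>\<sigma>>0. \<forall>c. density_path (\<lambda>t. p \<sigma> t c)"
    and path_CE: "\<forall>\<sigma>>0. \<forall>c. solves_CE (\<lambda>t. p \<sigma> t c) (\<lambda>t. u \<sigma> t c)"
    and path_0: "\<forall>\<sigma>>0. \<forall>c z. p \<sigma> 0 c z = \<rho>0 z"
    and path_1: "\<forall>\<sigma>>0. \<forall>c z. p \<sigma> 1 c z = gauss_density (snd c) \<sigma> z"
    and path_pos: "\<forall>\<sigma>>0. \<forall>t\<in>{0..1}. \<forall>z. \<forall>n\<in>{1..N}. p \<sigma> t (z0 n, xh n) z > 0"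
    and flow: "\<forall>\<sigma>>0. \<forall>z. \<phi> \<sigma> 0 z = z \<and> (\<forall>t\<in>{0..1}.
        ((\<lambda>s. \<phi> \<sigma> s z) has_vector_derivative
           mcg_field (lik y) z0 xh (p \<sigma>) (u \<sigma>) N t (\<phi> \<sigma> t z)) (at t within {0..1}))"
    and flow_meas: "\<forall>\<sigma>>0. \<forall>t\<in>{0..1}. \<phi> \<sigma> t \<in> borel_measurable borel"
    and push_sol: "\<forall>\<sigma>>0. \<exists>q. density_path q
        \<and> solves_CE q (mcg_field (lik y) z0 xh (p \<sigma>) (u \<sigma>) N) \<and> (\<forall>z. q 0 z = \<rho>0 z)
        \<and> (\<forall>t\<in>{0..1}. distr (density lborel (\<lambda>x. ennreal (\<rho>0 x))) lborel (\<phi> \<sigma> t)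
                        = density lborel (\<lambda>x. ennreal (q t x)))"
    and push_unique: "\<forall>\<sigma>>0. \<forall>q. density_path q
        \<and> solves_CE q (mcg_field (lik y) z0 xh (p \<sigma>) (u \<sigma>) N) \<and> (\<forall>z. q 0 z = \<rho>0 z)
        \<longrightarrow> (\<forall>t\<in>{0..1}. density lborel (\<lambda>x. ennreal (q t x))
                 = distr (density lborel (\<lambda>x. ennreal (\<rho>0 x))) lborel (\<phi> \<sigma> t))"
  shows "(\<forall>\<sigma>>0. \<forall>t\<in>{0..1}.
            distr (density lborel (\<lambda>x. ennreal (\<rho>0 x))) lborel (\<phi> \<sigma> t)
          = density lborel (\<lambda>z. ennreal (\<Sum>n\<in>{1..N}. lik_weight (lik y) xh N n * p \<sigma> t (z0 n, xh n) z)))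
       \<and> (\<forall>\<sigma>>0.
            distr (density lborel (\<lambda>x. ennreal (\<rho>0 x))) lborel (\<phi> \<sigma> 1)
          = density lborel (\<lambda>z. ennreal (\<Sum>n\<in>{1..N}. lik_weight (lik y) xh N n * gauss_density (xh n) \<sigma> z)))
       \<and> weak_conv_at (\<lambda>\<sigma>. distr (density lborel (\<lambda>x. ennreal (\<rho>0 x))) lborel (\<phi> \<sigma> 1))
                      (bpf_measure (lik y) xh N) (at_right 0)"
  proof -
  let ?L = "lik y"
  let ?c = "\<lambda>n. (z0 n, xh n)"
  define SL where "SL = (\<Sum>m\<in>{1..N}. ?L (xh m))"
  have ne: "{1..N} \<noteq> {}" using N_pos by simp
  have SLpos: "SL > 0" unfolding SL_def using lik_pos ne by (intro sum_pos) auto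
  define w where "w n = lik_weight ?L xh N n" for n
  have w_def': "w n = ?L (xh n) / SL" for n unfolding w_def lik_weight_def SL_def by simp
  have wnn: "w n \<ge> 0" for n unfolding w_def' using SLpos lik_pos[rule_format, of "xh n"] by simp
  have wsum: "(\<Sum>n\<in>{1..N}. w n) = 1"
    unfolding w_def' using SLpos by (simp add: SL_def flip: sum_divide_distrib)
  define P where "P \<sigma> t z = (\<Sum>n\<in>{1..N}. w n * p \<sigma> t (?c n) z)" for \<sigma> t z
  have isd: "is_density (p \<sigma> t c)" if "\<sigma> > 0" "t \<in> {0..1}" for \<sigma> t c
    using path_dens that unfolding density_path_def by (cases c) auto
  have gd: "is_density (gauss_density m \<sigma>)" if "\<sigma> > 0" for \<sigma> and m :: 'a
  proof -
    have "is_density (p \<sigma> 1 (xh 0, m))" using isd that by simp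
    moreover have "p \<sigma> 1 (xh 0, m) = gauss_density m \<sigma>" using path_1 that by auto
    ultimately show ?thesis by simp
  qed
  have part1: "\<forall>\<sigma>>0. \<forall>t\<in>{0..1}.
            distr (density lborel (\<lambda>x. ennreal (\<rho>0 x))) lborel (\<phi> \<sigma> t)
          = density lborel (\<lambda>z. ennreal (P \<sigma> t z))"
  proof (intro allI impI ballI)
    fix \<sigma> t :: real assume \<sigma>: "\<sigma> > 0" and t: "t \<in> {0..1}"
    have dp: "density_path (P \<sigma>)"
      unfolding density_path_def
    proof
      fix t :: real assume t: "t \<in> {0..1}"
      have d: "\<And>n. is_density (p \<sigma> t (?c n))" using isd \<sigma> t by auto
      have dm[measurable]: "\<And>n. p \<sigma> t (?c n) \<in> borel_measurable borel"
        using d unfolding is_density_def by simp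
      show "is_density (P \<sigma> t)"
        unfolding is_density_def
      proof (intro conjI allI)
        show "P \<sigma> t \<in> borel_measurable lborel"
          unfolding P_def[abs_def] by measurable
        show "0 \<le> P \<sigma> t x" for x
          unfolding P_def using d wnn unfolding is_density_def by (intro sum_nonneg) auto
        show "integrable lborel (P \<sigma> t)"
          unfolding P_def[abs_def] using d unfolding is_density_def by auto
        have "integral\<^sup>L lborel (P \<sigma> t) = (\<Sum>n\<in>{1..N}. w n * integral\<^sup>L lborel (p \<sigma> t (?c n)))"
          unfolding P_def[abs_def] using d unfolding is_density_def by (simp add: integral_sum)
        also have "\<dots> = 1" using d wsum unfolding is_density_def by simp
        finally show "integral\<^sup>L lborel (P \<sigma> t) = 1" .
      qed
    qed
    have q0: "\<forall>z. P \<sigma> 0 z = \<rho>0 z"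
      unfolding P_def using path_0 \<sigma> wsum by (simp flip: sum_distrib_right)
    have ce: "solves_CE (P \<sigma>) (mcg_field ?L z0 xh (p \<sigma>) (u \<sigma>) N)"
      unfolding solves_CE_def
    proof (intro ballI allI)
      fix t z assume t: "(t::real) \<in> {0..1}"
      have "\<forall>n. \<exists>dq D. ((\<lambda>s. p \<sigma> s (?c n) z) has_real_derivative dq) (at t within {0..1})
          \<and> ((\<lambda>x. p \<sigma> t (?c n) x *\<^sub>R u \<sigma> t (?c n) x) has_derivative D) (at z)
          \<and> dq + (\<Sum>i\<in>Basis. D i \<bullet> i) = 0" (is "\<forall>n. \<exists>dq D. ?Q n dq D")
        using path_CE \<sigma> t unfolding solves_CE_def by blast
      then have "\<exists>dq. \<forall>n. \<exists>D. ?Q n (dq n) D" by (rule choice)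
      then obtain dq where h1: "\<forall>n. \<exists>D. ?Q n (dq n) D" by (elim exE)
      then have "\<exists>D. \<forall>n. ?Q n (dq n) (D n)" by (rule choice)
      then obtain D where H': "\<forall>n. ?Q n (dq n) (D n)" by (elim exE)
      have H: "((\<lambda>s. p \<sigma> s (?c n) z) has_real_derivative dq n) (at t within {0..1})
          \<and> ((\<lambda>x. p \<sigma> t (?c n) x *\<^sub>R u \<sigma> t (?c n) x) has_derivative D n) (at z)
          \<and> dq n + (\<Sum>i\<in>Basis. D n i \<bullet> i) = 0" for n
        using H' by (rule spec)
      have feq: "(\<lambda>x. P \<sigma> t x *\<^sub>R mcg_field ?L z0 xh (p \<sigma>) (u \<sigma>) N t x)
          = (\<lambda>x. \<Sum>n\<in>{1..N}. w n *\<^sub>R (p \<sigma> t (?c n) x *\<^sub>R u \<sigma> t (?c n) x))"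
      proof
        fix x
        define S where "S = (\<Sum>m\<in>{1..N}. ?L (xh m) * p \<sigma> t (?c m) x)"
        have Spos: "S > 0" unfolding S_def using ne lik_pos path_pos \<sigma> t
          by (intro sum_pos) (auto intro!: mult_pos_pos)
        have PS: "P \<sigma> t x = S / SL"
          unfolding P_def S_def w_def' by (simp add: sum_divide_distrib)
        have "P \<sigma> t x *\<^sub>R mcg_field ?L z0 xh (p \<sigma>) (u \<sigma>) N t x
            = (\<Sum>n\<in>{1..N}. (S / SL * (?L (xh n) * p \<sigma> t (?c n) x / S)) *\<^sub>R u \<sigma> t (?c n) x)"
          unfolding mcg_field_def PS S_def by (simp add: scaleR_sum_right)
        also have "\<dots> = (\<Sum>n\<in>{1..N}. w n *\<^sub>R (p \<sigma> t (?c n) x *\<^sub>R u \<sigma> t (?c n) x))"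
          using Spos SLpos by (intro sum.cong refl) (simp add: w_def')
        finally show "P \<sigma> t x *\<^sub>R mcg_field ?L z0 xh (p \<sigma>) (u \<sigma>) N t x
            = (\<Sum>n\<in>{1..N}. w n *\<^sub>R (p \<sigma> t (?c n) x *\<^sub>R u \<sigma> t (?c n) x))" .
      qed
      show "\<exists>dq D. ((\<lambda>s. P \<sigma> s z) has_real_derivative dq) (at t within {0..1})
          \<and> ((\<lambda>x. P \<sigma> t x *\<^sub>R mcg_field ?L z0 xh (p \<sigma>) (u \<sigma>) N t x) has_derivative D) (at z)
          \<and> dq + (\<Sum>i\<in>Basis. D i \<bullet> i) = 0"
      proof (intro exI conjI)
        show "((\<lambda>s. P \<sigma> s z) has_real_derivative (\<Sum>n\<in>{1..N}. w n * dq n)) (at t within {0..1})"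
          unfolding P_def using H by (intro DERIV_sum DERIV_cmult) auto
        show "((\<lambda>x. P \<sigma> t x *\<^sub>R mcg_field ?L z0 xh (p \<sigma>) (u \<sigma>) N t x) has_derivative
            (\<lambda>h. \<Sum>n\<in>{1..N}. w n *\<^sub>R D n h)) (at z)"
          unfolding feq using H by (intro has_derivative_sum has_derivative_scaleR_right) auto
        have "(\<Sum>n\<in>{1..N}. w n * dq n) + (\<Sum>i\<in>Basis. (\<Sum>n\<in>{1..N}. w n *\<^sub>R D n i) \<bullet> i)
            = (\<Sum>n\<in>{1..N}. w n * (dq n + (\<Sum>i\<in>Basis. D n i \<bullet> i)))"
          by (simp add: inner_sum_left sum_distrib_left sum.distrib distrib_left sum.swap[of _ Basis])
        also have "\<dots> = 0" using H by simp
        finally show "(\<Sum>n\<in>{1..N}. w n * dq n) + (\<Sum>i\<in>Basis. (\<Sum>n\<in>{1..N}. w n *\<^sub>R D n i) \<bullet> i) = 0" .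
      qed
    qed
    show "distr (density lborel (\<lambda>x. ennreal (\<rho>0 x))) lborel (\<phi> \<sigma> t)
          = density lborel (\<lambda>z. ennreal (P \<sigma> t z))"
      using push_unique \<sigma> dp ce q0 t by metis
  qed
  have part2: "\<forall>\<sigma>>0.
            distr (density lborel (\<lambda>x. ennreal (\<rho>0 x))) lborel (\<phi> \<sigma> 1)
          = density lborel (\<lambda>z. ennreal (\<Sum>n\<in>{1..N}. w n * gauss_density (xh n) \<sigma> z))"
    using part1 path_1 unfolding P_def by simp
  have part3: "weak_conv_at (\<lambda>\<sigma>. distr (density lborel (\<lambda>x. ennreal (\<rho>0 x))) lborel (\<phi> \<sigma> 1))
                      (bpf_measure (lik y) xh N) (at_right 0)"
    unfolding weak_conv_at_def
  proof (intro allI impI)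
    fix f :: "'a \<Rightarrow> real" assume fa: "continuous_on UNIV f \<and> bounded (range f)"
    then have cont: "continuous_on UNIV f" and bd: "bounded (range f)" by auto
    have fm: "f \<in> borel_measurable borel"
      using borel_measurable_continuous_onI[OF cont] by simp
    have rhs: "(\<integral>x. f x \<partial>bpf_measure (lik y) xh N) = (\<Sum>n\<in>{1..N}. w n * f (xh n))"
    proof -
      have "(\<integral>x. f x \<partial>bpf_measure (lik y) xh N)
          = (\<integral>n. f (xh n) \<partial>density (count_space {1..N}) (\<lambda>n. ennreal (w n)))"
        unfolding bpf_measure_def w_def[symmetric] using fm by (intro integral_distr) auto
      also have "\<dots> = (\<integral>n. w n *\<^sub>R f (xh n) \<partial>count_space {1..N})"
        using wnn by (intro integral_density) auto
      also have "\<dots> = (\<Sum>n\<in>{1..N}. w n * f (xh n))"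
        by (simp add: lebesgue_integral_count_space_finite)
      finally show ?thesis .
    qed
    have lhs: "(\<integral>x. f x \<partial>distr (density lborel (\<lambda>x. ennreal (\<rho>0 x))) lborel (\<phi> \<sigma> 1))
        = (\<Sum>n\<in>{1..N}. w n * (\<integral>z. gauss_density (xh n) \<sigma> z * f z \<partial>lborel))" if \<sigma>: "\<sigma> > 0" for \<sigma>
    proof -
      have gi: "\<And>n. integrable lborel (\<lambda>z. gauss_density (xh n) \<sigma> z * f z)"
        using dens_bdd_integrable gd[OF \<sigma>] fm bd by blast
      have gm: "\<And>n. gauss_density (xh n) \<sigma> \<in> borel_measurable lborel" and gp: "\<And>n z. gauss_density (xh n) \<sigma> z \<ge> 0"
        using gd[OF \<sigma>] unfolding is_density_def by auto
      have "(\<integral>x. f x \<partial>distr (density lborel (\<lambda>x. ennreal (\<rho>0 x))) lborel (\<phi> \<sigma> 1))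
          = (\<integral>z. f z \<partial>density lborel (\<lambda>z. ennreal (\<Sum>n\<in>{1..N}. w n * gauss_density (xh n) \<sigma> z)))"
        using part2 \<sigma> by simp
      also have "\<dots> = (\<integral>z. (\<Sum>n\<in>{1..N}. w n * gauss_density (xh n) \<sigma> z) *\<^sub>R f z \<partial>lborel)"
        using fm gm gp wnn by (intro integral_density) (auto intro!: sum_nonneg)
      also have "\<dots> = (\<integral>z. (\<Sum>n\<in>{1..N}. w n * (gauss_density (xh n) \<sigma> z * f z)) \<partial>lborel)"
        by (simp add: sum_distrib_right mult.assoc)
      also have "\<dots> = (\<Sum>n\<in>{1..N}. w n * (\<integral>z. gauss_density (xh n) \<sigma> z * f z \<partial>lborel))"
        using gi by (simp add: integral_sum)
      finally show ?thesis .
    qed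
    have "((\<lambda>\<sigma>. \<Sum>n\<in>{1..N}. w n * (\<integral>z. gauss_density (xh n) \<sigma> z * f z \<partial>lborel))
        \<longlongrightarrow> (\<Sum>n\<in>{1..N}. w n * f (xh n))) (at_right 0)"
      using gd cont bd by (intro tendsto_sum tendsto_mult_left gauss_conv) auto
    then have "((\<lambda>\<sigma>. (\<integral>x. f x \<partial>distr (density lborel (\<lambda>x. ennreal (\<rho>0 x))) lborel (\<phi> \<sigma> 1)))
        \<longlongrightarrow> (\<Sum>n\<in>{1..N}. w n * f (xh n))) (at_right 0)"
      by (rule Lim_transform_eventually)
        (use eventually_at_right_less[of "0::real"] lhs in \<open>auto elim!: eventually_mono\<close>)
    then show "((\<lambda>\<sigma>. \<integral>x. f x \<partial>distr (density lborel (\<lambda>x. ennreal (\<rho>0 x))) lborel (\<phi> \<sigma> 1))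
        \<longlongrightarrow> (\<integral>x. f x \<partial>bpf_measure (lik y) xh N)) (at_right 0)"
      unfolding rhs .
  qed
  show ?thesis
    using part1 part2 part3 unfolding P_def w_def by blast
qed

end
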